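(* Let $p$ be an odd prime. For every simple rank $3$ $\mathbb{Z}_p$-invariant matroid structure on $\mathbb{Z}_p$ there exists a distinct difference system $S_1,\ldots,S_k$ in $\mathbb{Z}_p$ such that the bases of the matroid are exactly the $3$-element subsets of $\mathbb{Z}_p$ which are not a translate of a subset of any $S_i$.
   Context: For an abelian group $A$, subsets $S_1,\ldots,S_k \subseteq A$ form a distinct difference system if: (i) for any $i,j$ and any $x,y \in S_i$, $z,w \in S_j$ with $x \neq y$ and $z \neq w$, the equation $x-y=z-w$ implies $x=z$ and $y=w$; (ii) each $S_i$ contains $0$ and at least one other element; (iii) $S_i \cap S_j = \{0\}$ for $i \neq j$. $\mathbb{Z}_p$ acts on itself by translation; a matroid on $\mathbb{Z}_p$ is $\mathbb{Z}_p$-invariant if translates of bases are bases. A matroid is simple if every circuit has at least three elements. A translate of a set $T$ is a set $\{t+a : t \in T\}$. *)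

theory Defs
  imports "HOL-Computational_Algebra.Primes"
begin

text \<open>Z_p is modelled as the set {0..<p} of integers with arithmetic mod p.\<close>

definition Zp :: "int \<Rightarrow> int set" where
  "Zp p = {0..<p}"

definition translate :: "int \<Rightarrow> int set \<Rightarrow> int \<Rightarrow> int set" where
  "translate p T a = {(t + a) mod p | t. t \<in> T}"

definition matroid_bases :: "'a set \<Rightarrow> 'a set set \<Rightarrow> bool" where
  "matroid_bases E \<B> \<longleftrightarrow> finite E \<and> \<B> \<noteq> {} \<and> (\<forall>B\<in>\<B>. B \<subseteq> E) \<and>
     (\<forall>B1\<in>\<B>. \<forall>B2\<in>\<B>. \<forall>x\<in>B1 - B2. \<exists>y\<in>B2 - B1. insert y (B1 - {x}) \<in> \<B>)"

definition indep :: "'a set set \<Rightarrow> 'a set \<Rightarrow> bool" where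
  "indep \<B> I \<longleftrightarrow> (\<exists>B\<in>\<B>. I \<subseteq> B)"

definition circuit :: "'a set \<Rightarrow> 'a set set \<Rightarrow> 'a set \<Rightarrow> bool" where
  "circuit E \<B> C \<longleftrightarrow> C \<subseteq> E \<and> \<not> indep \<B> C \<and> (\<forall>D. D \<subset> C \<longrightarrow> indep \<B> D)"

definition simple_matroid :: "'a set \<Rightarrow> 'a set set \<Rightarrow> bool" where
  "simple_matroid E \<B> \<longleftrightarrow> (\<forall>C. circuit E \<B> C \<longrightarrow> card C \<ge> 3)"

definition matroid_rank_eq :: "'a set set \<Rightarrow> nat \<Rightarrow> bool" where
  "matroid_rank_eq \<B> r \<longleftrightarrow> (\<forall>B\<in>\<B>. card B = r)"

definition Zp_invariant :: "int \<Rightarrow> int set set \<Rightarrow> bool" where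
  "Zp_invariant p \<B> \<longleftrightarrow> (\<forall>B\<in>\<B>. \<forall>a\<in>Zp p. translate p B a \<in> \<B>)"

definition distinct_difference_system :: "int \<Rightarrow> nat \<Rightarrow> (nat \<Rightarrow> int set) \<Rightarrow> bool" where
  "distinct_difference_system p k S \<longleftrightarrow>
     (\<forall>i<k. S i \<subseteq> Zp p) \<and>
     (\<forall>i<k. \<forall>j<k. \<forall>x\<in>S i. \<forall>y\<in>S i. \<forall>z\<in>S j. \<forall>w\<in>S j.
        x \<noteq> y \<longrightarrow> z \<noteq> w \<longrightarrow> (x - y) mod p = (z - w) mod p \<longrightarrow> x = z \<and> y = w) \<and>
     (\<forall>i<k. 0 \<in> S i \<and> (\<exists>x\<in>S i. x \<noteq> 0)) \<and>
     (\<forall>i<k. \<forall>j<k. i \<noteq> j \<longrightarrow> S i \<inter> S j = {0})"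

end

theory Submission
  imports Defs
begin

locale zpm =
  fixes p :: int and BB :: "int set set"
  assumes pr: "prime p"
    and mb: "matroid_bases (Zp p) BB"
    and sm: "simple_matroid (Zp p) BB"
    and rk: "matroid_rank_eq BB 3"
    and inv: "Zp_invariant p BB"
begin

definition tr :: "int \<Rightarrow> int \<Rightarrow> int" where "tr a t = (t + a) mod p"

lemma p_pos: "p > 0" using prime_gt_1_int[OF pr] by simp

lemma translate_eq: "translate p T a = tr a ` T"
  by (auto simp: translate_def tr_def)

lemma tr_Zp[simp]: "tr a t \<in> Zp p"
  using p_pos by (simp add: tr_def Zp_def)

lemma Zp_mod: "x \<in> Zp p \<Longrightarrow> x mod p = x"
  by (simp add: Zp_def)

lemma tr_inj: "x \<in> Zp p \<Longrightarrow> y \<in> Zp p \<Longrightarrow> tr a x = tr a y \<Longrightarrow> x = y"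
  unfolding tr_def by (metis Zp_mod mod_eq_dvd_iff add_diff_cancel_right)

lemma tr_tr: "tr b (tr a t) = tr ((a + b) mod p) t"
  unfolding tr_def by (simp add: mod_add_left_eq mod_add_right_eq add.assoc)

lemma aux0: "(a + (- a) mod p) mod p = 0" "((- a) mod p + a) mod p = 0"
  by (simp_all add: mod_add_right_eq mod_add_left_eq)

lemma tr_back: "x \<in> Zp p \<Longrightarrow> tr ((- a) mod p) (tr a x) = x"
  unfolding tr_tr unfolding tr_def aux0(1) by (simp add: Zp_mod)

lemma tr_0: "x \<in> Zp p \<Longrightarrow> tr 0 x = x"
  by (simp add: tr_def Zp_mod)

lemma bases_sub: "X \<in> BB \<Longrightarrow> X \<subseteq> Zp p"
  using mb by (auto simp: matroid_bases_def)

lemma bases_card: "X \<in> BB \<Longrightarrow> card X = 3"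
  using rk by (auto simp: matroid_rank_eq_def)

lemma BB_ne: "BB \<noteq> {}"
  using mb by (auto simp: matroid_bases_def)

lemma exch: "B1 \<in> BB \<Longrightarrow> B2 \<in> BB \<Longrightarrow> x \<in> B1 - B2 \<Longrightarrow> \<exists>y\<in>B2 - B1. insert y (B1 - {x}) \<in> BB"
  using mb by (auto simp: matroid_bases_def)

lemma inv1: "X \<in> BB \<Longrightarrow> a \<in> Zp p \<Longrightarrow> tr a ` X \<in> BB"
  using inv by (auto simp: Zp_invariant_def translate_eq)

lemma inv2: "X \<subseteq> Zp p \<Longrightarrow> a \<in> Zp p \<Longrightarrow> tr a ` X \<in> BB \<longleftrightarrow> X \<in> BB"
proof
  assume X: "X \<subseteq> Zp p" and a: "a \<in> Zp p" and t: "tr a ` X \<in> BB"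
  have "tr ((- a) mod p) ` tr a ` X \<in> BB"
    by (rule inv1[OF t]) (use p_pos in \<open>simp add: Zp_def\<close>)
  moreover have "tr ((- a) mod p) ` tr a ` X = X"
    using X tr_back by (auto simp: image_image subset_eq image_iff)
  ultimately show "X \<in> BB" by simp
qed (rule inv1)

lemma indep_empty: "indep BB {}"
  using BB_ne by (auto simp: indep_def)

lemma pair_indep:
  assumes "x \<in> Zp p" "y \<in> Zp p" "x \<noteq> y"
  shows "\<exists>X\<in>BB. {x, y} \<subseteq> X"
proof (rule ccontr)
  assume n: "\<not> ?thesis"
  hence ni: "\<not> indep BB {x, y}" by (auto simp: indep_def)
  have sing: "indep BB {z}" if "z \<in> Zp p" for z
  proof (rule ccontr)
    assume "\<not> indep BB {z}"
    hence "circuit (Zp p) BB {z}"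
      using that indep_empty by (auto simp: circuit_def subset_singleton_iff)
    thus False using sm by (fastforce simp: simple_matroid_def)
  qed
  have "\<And>D. D \<subset> {x, y} \<Longrightarrow> D = {} \<or> D = {x} \<or> D = {y}" by auto
  hence "circuit (Zp p) BB {x, y}"
    using ni sing assms indep_empty by (auto simp: circuit_def)
  thus False using sm assms by (fastforce simp: simple_matroid_def)
qed

lemma three: "X \<in> BB \<Longrightarrow> \<exists>a b c. X = {a, b, c} \<and> a \<noteq> b \<and> b \<noteq> c \<and> a \<noteq> c"
  using bases_card card_3_iff by metis

lemma lemL:
  assumes Z: "a \<in> Zp p" "b \<in> Zp p" "c \<in> Zp p" "d \<in> Zp p"
    and dist: "a \<noteq> b" "a \<noteq> c" "a \<noteq> d" "b \<noteq> c" "b \<noteq> d" "c \<noteq> d"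
    and n1: "{a, b, c} \<notin> BB" and n2: "{a, b, d} \<notin> BB"
  shows "{a, c, d} \<notin> BB"
proof
  assume B1: "{a, c, d} \<in> BB"
  obtain X where X: "X \<in> BB" "{a, b} \<subseteq> X" using pair_indep Z dist by blast
  obtain e where e: "e \<in> X" "e \<noteq> a" "e \<noteq> b"
  proof -
    have "card X = 3" using X bases_card by simp
    moreover have "card {a, b} = 2" using dist by simp
    ultimately have "X \<noteq> {a, b}" by auto
    thus ?thesis using that X by blast
  qed
  have Xe: "X = {a, b, e}"
  proof -
    have "{a, b, e} \<subseteq> X" using X e by auto
    moreover have "card {a, b, e} = 3" using e dist by simp
    moreover have "finite X" "card X = 3" using X bases_card card.infinite by fastforce+
    ultimately show ?thesis by (metis card_subset_eq)
  qed
  have "e \<noteq> c" using X Xe n1 by auto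
  moreover have "e \<noteq> d" using X Xe n2 by auto
  ultimately have "e \<in> X - {a, c, d}" using e by auto
  then obtain y where y: "y \<in> {a, c, d} - X" "insert y (X - {e}) \<in> BB"
    using exch[OF X(1) B1] by blast
  have "X - {e} = {a, b}" using Xe e by auto
  hence "y = c \<or> y = d" "insert y {a, b} \<in> BB" using y Xe by auto
  thus False using n1 n2 by (auto simp: insert_commute)
qed

definition Ln :: "int \<Rightarrow> int \<Rightarrow> int set" where
  "Ln x y = {z \<in> Zp p. z = x \<or> z = y \<or> {x, y, z} \<notin> BB}"

lemma Ln_sub: "Ln x y \<subseteq> Zp p" by (auto simp: Ln_def)
lemma Ln_x: "x \<in> Zp p \<Longrightarrow> x \<in> Ln x y" by (auto simp: Ln_def)
lemma Ln_y: "y \<in> Zp p \<Longrightarrow> y \<in> Ln x y" by (auto simp: Ln_def)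
lemma Ln_sym: "Ln x y = Ln y x" by (auto simp: Ln_def insert_commute)

lemma K1:
  assumes "x \<in> Zp p" "y \<in> Zp p" "x \<noteq> y" "u \<in> Ln x y" "u \<noteq> x"
  shows "Ln x u = Ln x y"
proof (cases "u = y")
  case True thus ?thesis by simp
next
  case False
  have u: "u \<in> Zp p" "{x, y, u} \<notin> BB" using assms False by (auto simp: Ln_def)
  show ?thesis
  proof (rule set_eqI, rule iffI)
    fix z assume z: "z \<in> Ln x u"
    show "z \<in> Ln x y"
    proof (cases "z = x \<or> z = y \<or> z = u")
      case True thus ?thesis using assms u by (auto simp: Ln_def insert_commute)
    next
      case False
      hence "{x, u, z} \<notin> BB" "z \<in> Zp p" using z by (auto simp: Ln_def)
      moreover have "{x, u, y} \<notin> BB" using u by (simp add: insert_commute)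
      ultimately have "{x, y, z} \<notin> BB"
        using lemL[of x u y z] assms u False \<open>u \<noteq> y\<close> by auto
      thus ?thesis using \<open>z \<in> Zp p\<close> by (simp add: Ln_def)
    qed
  next
    fix z assume z: "z \<in> Ln x y"
    show "z \<in> Ln x u"
    proof (cases "z = x \<or> z = y \<or> z = u")
      case True thus ?thesis using assms u by (auto simp: Ln_def insert_commute)
    next
      case False
      hence "{x, y, z} \<notin> BB" "z \<in> Zp p" using z by (auto simp: Ln_def)
      hence "{x, u, z} \<notin> BB"
        using lemL[of x y u z] assms u False \<open>u \<noteq> y\<close> by auto
      thus ?thesis using \<open>z \<in> Zp p\<close> by (simp add: Ln_def)
    qed
  qed
qed

lemma K:
  assumes "x \<in> Zp p" "y \<in> Zp p" "x \<noteq> y" "u \<in> Ln x y" "v \<in> Ln x y" "u \<noteq> v"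
  shows "Ln u v = Ln x y"
proof (cases "u = x")
  case True
  hence "v \<noteq> x" using assms(6) by simp
  from K1[OF assms(1,2,3,5) this] show ?thesis using True by simp
next
  case False
  have uZ: "u \<in> Zp p" "v \<in> Zp p" using assms(4,5) Ln_sub by auto
  have e1: "Ln x u = Ln x y" by (rule K1[OF assms(1,2,3,4) False])
  have e2: "Ln u x = Ln x y" using e1 Ln_sym[of u x] by simp
  have "v \<in> Ln u x" using assms(5) by (simp add: e2)
  have "Ln u v = Ln u x"
    by (rule K1[OF uZ(1) assms(1) False \<open>v \<in> Ln u x\<close> assms(6)[symmetric]])
  thus ?thesis using e2 by simp
qed

lemma basis_not_in_line:
  assumes "X \<in> BB" "x \<in> Zp p" "y \<in> Zp p" "x \<noteq> y" "X \<subseteq> Ln x y"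
  shows False
proof -
  obtain a b c where abc: "X = {a, b, c}" "a \<noteq> b" "b \<noteq> c" "a \<noteq> c"
    using three[OF assms(1)] by blast
  have "Ln a b = Ln x y" using K[of x y a b] assms abc by auto
  hence "c \<in> Ln a b" using assms abc by auto
  hence "{a, b, c} \<notin> BB" using abc by (auto simp: Ln_def)
  thus False using abc assms by simp
qed

lemma Ln_tr_sub:
  assumes "x \<in> Zp p" "y \<in> Zp p" "a \<in> Zp p"
  shows "tr a ` Ln x y \<subseteq> Ln (tr a x) (tr a y)"
proof
  fix w assume "w \<in> tr a ` Ln x y"
  then obtain z where z: "z \<in> Ln x y" "w = tr a z" by auto
  have zZ: "z \<in> Zp p" using z Ln_sub by auto
  show "w \<in> Ln (tr a x) (tr a y)"
  proof (cases "z = x \<or> z = y")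
    case True thus ?thesis using z by (auto simp: Ln_def)
  next
    case False
    hence n: "{x, y, z} \<notin> BB" using z by (auto simp: Ln_def)
    have "tr a ` {x, y, z} \<notin> BB" using inv2[of "{x,y,z}" a] n assms zZ by auto
    thus ?thesis using z by (auto simp: Ln_def)
  qed
qed

lemma Ln_tr:
  assumes "x \<in> Zp p" "y \<in> Zp p" "a \<in> Zp p"
  shows "tr a ` Ln x y = Ln (tr a x) (tr a y)"
proof
  show "tr a ` Ln x y \<subseteq> Ln (tr a x) (tr a y)" by (rule Ln_tr_sub[OF assms])
next
  define a' where "a' = (- a) mod p"
  have a': "a' \<in> Zp p" using p_pos by (simp add: a'_def Zp_def)
  have "tr a' ` Ln (tr a x) (tr a y) \<subseteq> Ln (tr a' (tr a x)) (tr a' (tr a y))"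
    by (rule Ln_tr_sub) (use a' in auto)
  also have "\<dots> = Ln x y" using tr_back assms a'_def by simp
  finally have "tr a ` tr a' ` Ln (tr a x) (tr a y) \<subseteq> tr a ` Ln x y" by blast
  moreover have "tr a ` tr a' ` Ln (tr a x) (tr a y) = Ln (tr a x) (tr a y)"
  proof -
    have "tr a (tr a' w) = w" if "w \<in> Zp p" for w
      using that unfolding tr_tr a'_def unfolding tr_def aux0(2) by (simp add: Zp_mod)
    thus ?thesis using Ln_sub by (force simp: image_image)
  qed
  ultimately show "Ln (tr a x) (tr a y) \<subseteq> tr a ` Ln x y" by simp
qed


lemma zero_Zp: "0 \<in> Zp p" using p_pos by (simp add: Zp_def)

lemma noninv:
  assumes d: "d \<in> Zp p" "d \<noteq> 0" and t: "t \<in> Zp p" "t \<noteq> 0"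
    and eq: "tr t ` Ln 0 d = Ln 0 d"
  shows False
proof -
  define L where "L = Ln 0 d"
  have mult: "(int n * t) mod p \<in> L" for n :: nat
  proof (induction n)
    case 0 thus ?case using Ln_x[OF zero_Zp] by (simp add: L_def)
  next
    case (Suc n)
    have "tr t ((int n * t) mod p) \<in> tr t ` L" using Suc.IH by (rule imageI)
    hence "tr t ((int n * t) mod p) \<in> L" using eq unfolding L_def by simp
    moreover have "int (Suc n) * t = int n * t + t" by (simp add: algebra_simps)
    hence "tr t ((int n * t) mod p) = (int (Suc n) * t) mod p"
      unfolding tr_def by (metis mod_add_left_eq)
    ultimately show ?case by simp
  qed
  have "\<not> p dvd t" using t by (intro zdvd_not_zless) (auto simp: Zp_def)
  hence "coprime p t" using prime_imp_coprime_int[OF pr] by blast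
  hence g: "gcd t p = 1" by (simp add: coprime_iff_gcd_eq_1 gcd.commute)
  obtain u v where "u * t + v * p = gcd t p" using bezout_int by blast
  hence uv: "u * t + v * p = 1" using g by simp
  have ut: "(u * t) mod p = 1"
  proof -
    have "(u * t) mod p = (u * t + v * p) mod p" by simp
    thus ?thesis using uv prime_gt_1_int[OF pr] by simp
  qed
  have "Zp p \<subseteq> L"
  proof
    fix z assume z: "z \<in> Zp p"
    define n where "n = nat ((z * u) mod p)"
    have n: "int n = (z * u) mod p" using p_pos by (simp add: n_def)
    have "(int n * t) mod p = ((z * u) mod p * t) mod p" using n by simp
    also have "\<dots> = (z * (u * t)) mod p" by (metis mod_mult_left_eq mult.assoc)
    also have "\<dots> = (z * ((u * t) mod p)) mod p" by (metis mod_mult_right_eq)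
    also have "\<dots> = z" using ut z by (simp add: Zp_mod)
    finally show "z \<in> L" using mult[of n] by simp
  qed
  moreover obtain X where X: "X \<in> BB" using BB_ne by blast
  ultimately have "X \<subseteq> Ln 0 d" using bases_sub[OF X] L_def by blast
  from basis_not_in_line[OF X zero_Zp d(1) d(2)[symmetric] this] show False .
qed

definition Lines0 :: "int set set" where
  "Lines0 = {Ln 0 d | d. d \<in> Zp p \<and> d \<noteq> 0}"

definition orb :: "int set \<Rightarrow> int set set" where
  "orb L = {tr a ` L | a. a \<in> Zp p}"

definition rep :: "int set \<Rightarrow> int set" where
  "rep L = (SOME M. M \<in> Lines0 \<and> orb M = orb L)"

definition RR :: "int set set" where "RR = rep ` Lines0"

lemma orb_tr:
  assumes "L \<subseteq> Zp p" "a \<in> Zp p"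
  shows "orb (tr a ` L) = orb L"
proof
  show "orb (tr a ` L) \<subseteq> orb L"
  proof
    fix X assume "X \<in> orb (tr a ` L)"
    then obtain b where b: "b \<in> Zp p" "X = tr b ` tr a ` L" by (auto simp: orb_def)
    hence "X = tr ((a + b) mod p) ` L" by (simp add: image_image tr_tr)
    moreover have "(a + b) mod p \<in> Zp p" using p_pos by (simp add: Zp_def)
    ultimately show "X \<in> orb L" by (auto simp: orb_def)
  qed
next
  show "orb L \<subseteq> orb (tr a ` L)"
  proof
    fix X assume "X \<in> orb L"
    then obtain c where c: "c \<in> Zp p" "X = tr c ` L" by (auto simp: orb_def)
    have "(a + (c - a) mod p) mod p = c" using c(1)
      by (simp add: mod_add_right_eq Zp_mod)
    hence "X = tr ((c - a) mod p) ` tr a ` L" using c by (simp add: image_image tr_tr)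
    moreover have "(c - a) mod p \<in> Zp p" using p_pos by (simp add: Zp_def)
    ultimately show "X \<in> orb (tr a ` L)" by (auto simp: orb_def)
  qed
qed

lemma self_orb: "L \<subseteq> Zp p \<Longrightarrow> L \<in> orb L"
  unfolding orb_def using zero_Zp tr_0
  by (auto intro!: exI[of _ 0] simp: image_iff subset_eq)

lemma Lines0_sub: "M \<in> Lines0 \<Longrightarrow> M \<subseteq> Zp p"
  using Ln_sub by (auto simp: Lines0_def)

lemma rep_prop: "L \<in> Lines0 \<Longrightarrow> rep L \<in> Lines0 \<and> orb (rep L) = orb L"
  unfolding rep_def by (rule someI[of _ L]) simp

lemma RR_prop: "M \<in> RR \<Longrightarrow> M \<in> Lines0 \<and> rep M = M"
proof -
  assume "M \<in> RR"
  then obtain L where L: "L \<in> Lines0" "M = rep L" by (auto simp: RR_def)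
  have "M \<in> Lines0" "orb M = orb L" using rep_prop[OF L(1)] L by auto
  moreover have "rep M = rep L" unfolding rep_def using \<open>orb M = orb L\<close> by simp
  ultimately show ?thesis using L by simp
qed

lemma RR_tr:
  assumes "M \<in> RR" "M' \<in> RR" "a \<in> Zp p" "M' = tr a ` M"
  shows "M' = M"
proof -
  have "orb M' = orb M" using assms orb_tr Lines0_sub RR_prop by metis
  hence "rep M' = rep M" unfolding rep_def by simp
  thus ?thesis using RR_prop assms by metis
qed

lemma cover:
  assumes "x \<in> Zp p" "y \<in> Zp p" "x \<noteq> y"
  shows "\<exists>M\<in>RR. \<exists>c\<in>Zp p. Ln x y = tr c ` M"
proof -
  define a where "a = (- x) mod p"
  have a: "a \<in> Zp p" using p_pos by (simp add: a_def Zp_def)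
  have ax: "tr a x = 0" using assms(1) by (simp add: a_def tr_def mod_add_right_eq)
  have ay: "tr a y \<noteq> 0" using tr_inj[OF assms(1,2), of a] assms(3) ax by auto
  define L' where "L' = tr a ` Ln x y"
  have L': "L' = Ln 0 (tr a y)" using Ln_tr[OF assms(1,2) a] ax L'_def by simp
  hence L'0: "L' \<in> Lines0" using ay by (auto simp: Lines0_def)
  define M where "M = rep L'"
  have M: "M \<in> RR" using L'0 by (simp add: RR_def M_def)
  have "L' \<in> orb M" using rep_prop[OF L'0] self_orb[OF Lines0_sub[OF L'0]] M_def by simp
  then obtain b where b: "b \<in> Zp p" "L' = tr b ` M" by (auto simp: orb_def)
  have "tr x ` L' = (\<lambda>w. tr x (tr a w)) ` Ln x y" by (simp add: L'_def image_image)
  also have "\<dots> = id ` Ln x y"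
  proof (rule image_cong)
    fix w assume "w \<in> Ln x y"
    hence "w \<in> Zp p" using Ln_sub by blast
    thus "tr x (tr a w) = id w" unfolding a_def tr_tr unfolding tr_def aux0(2) by (simp add: Zp_mod)
  qed simp
  finally have "tr x ` L' = Ln x y" by simp
  hence "Ln x y = tr ((b + x) mod p) ` M" using b by (simp add: image_image tr_tr)
  moreover have "(b + x) mod p \<in> Zp p" using p_pos by (simp add: Zp_def)
  ultimately show ?thesis using M by blast
qed


lemma main:
  "\<exists>k S. distinct_difference_system p k S \<and>
           (\<forall>X. X \<in> BB \<longleftrightarrow>
              (X \<subseteq> Zp p \<and> card X = 3 \<and>
               \<not> (\<exists>i<k. \<exists>T\<subseteq>S i. \<exists>a\<in>Zp p. X = translate p T a)))"
proof -
  have "RR \<subseteq> Pow (Zp p)" using RR_prop Lines0_sub by blast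
  moreover have "finite (Zp p)" by (simp add: Zp_def)
  ultimately have fin: "finite RR" using finite_subset[of RR "Pow (Zp p)"] by simp
  define k where "k = card RR"
  obtain S where bij: "bij_betw S {0..<k} RR" using ex_bij_betw_nat_finite[OF fin] k_def by blast
  have img: "S ` {0..<k} = RR" and injo: "inj_on S {0..<k}" using bij by (simp_all add: bij_betw_def)
  have Si: "S i \<in> RR" if "i < k" for i
  proof -
    have "i \<in> {0..<k}" using that by simp
    hence "S i \<in> S ` {0..<k}" by (rule imageI)
    thus ?thesis using img by simp
  qed
  have injS: "i = j" if "i < k" "j < k" "S i = S j" for i j
    using inj_onD[OF injo that(3)] that by simp
  have surjS: "\<exists>i<k. S i = M" if "M \<in> RR" for M
  proof -
    have "M \<in> S ` {0..<k}" using img that by simp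
    then obtain i where "i \<in> {0..<k}" "M = S i" by (rule imageE)
    thus ?thesis by auto
  qed
  have Sline: "\<exists>d. d \<in> Zp p \<and> d \<noteq> 0 \<and> S i = Ln 0 d" if "i < k" for i
    using RR_prop[OF Si[OF that]] by (auto simp: Lines0_def)
  have dds: "distinct_difference_system p k S"
    unfolding distinct_difference_system_def
  proof (intro conjI allI impI ballI)
    fix i assume "i < k"
    thus "S i \<subseteq> Zp p" using Sline Ln_sub by blast
  next
    fix i assume "i < k"
    then obtain d where d: "d \<in> Zp p" "d \<noteq> 0" "S i = Ln 0 d" using Sline by blast
    show "0 \<in> S i" using d Ln_x[OF zero_Zp] by simp
    show "\<exists>x\<in>S i. x \<noteq> 0" using d Ln_y[OF d(1)] by blast
  next
    fix i j assume ij: "i < k" "j < k" "i \<noteq> j"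
    obtain di where di: "di \<in> Zp p" "di \<noteq> 0" "S i = Ln 0 di" using Sline ij by blast
    obtain dj where dj: "dj \<in> Zp p" "dj \<noteq> 0" "S j = Ln 0 dj" using Sline ij by blast
    show "S i \<inter> S j = {0}"
    proof
      show "{0} \<subseteq> S i \<inter> S j" using di dj Ln_x[OF zero_Zp] by simp
    next
      show "S i \<inter> S j \<subseteq> {0}"
      proof
        fix u assume u: "u \<in> S i \<inter> S j"
        show "u \<in> {0}"
        proof (rule ccontr)
          assume "u \<notin> {0}"
          hence u0: "u \<noteq> 0" by simp
          have "Ln 0 u = Ln 0 di"
            using K[OF zero_Zp di(1) di(2)[symmetric] Ln_x[OF zero_Zp] _ u0[symmetric]] u di by simp
          moreover have "Ln 0 u = Ln 0 dj"
            using K[OF zero_Zp dj(1) dj(2)[symmetric] Ln_x[OF zero_Zp] _ u0[symmetric]] u dj by simp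
          ultimately have "S i = S j" using di dj by simp
          thus False using injS ij by blast
        qed
      qed
    qed
  next
    fix i j x y z w
    assume ij: "i < k" "j < k" and xy: "x \<in> S i" "y \<in> S i" and zw: "z \<in> S j" "w \<in> S j"
      and ne: "x \<noteq> y" "z \<noteq> w" and eq: "(x - y) mod p = (z - w) mod p"
    obtain di where di: "di \<in> Zp p" "di \<noteq> 0" "S i = Ln 0 di" using Sline ij by blast
    obtain dj where dj: "dj \<in> Zp p" "dj \<noteq> 0" "S j = Ln 0 dj" using Sline ij by blast
    have Z: "x \<in> Zp p" "y \<in> Zp p" "z \<in> Zp p" "w \<in> Zp p"
      using xy zw di(3) dj(3) Ln_sub[of 0 di] Ln_sub[of 0 dj] by auto
    define t where "t = (x - z) mod p"
    have tZ: "t \<in> Zp p" using p_pos by (simp add: t_def Zp_def)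
    have h1: "tr t z = x" using Z by (simp add: tr_def t_def mod_add_right_eq Zp_mod)
    have "p dvd (x - y) - (z - w)" using eq by (simp add: mod_eq_dvd_iff)
    hence "p dvd (w + (x - z)) - y" by (simp add: algebra_simps)
    hence "(w + (x - z)) mod p = y mod p" by (simp add: mod_eq_dvd_iff)
    hence h2: "tr t w = y" using Z by (simp add: tr_def t_def mod_add_right_eq Zp_mod)
    have h3: "tr t ` S j = Ln (tr t 0) (tr t dj)" using Ln_tr[OF zero_Zp dj(1) tZ] dj by simp
    have h4: "tr t 0 \<noteq> tr t dj"
    proof
      assume "tr t 0 = tr t dj"
      hence "0 = dj" by (rule tr_inj[OF zero_Zp dj(1)])
      with dj(2) show False by simp
    qed
    have "x \<in> tr t ` S j" using h1 zw by force
    moreover have "y \<in> tr t ` S j" using h2 zw by force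
    ultimately have "Ln x y = tr t ` S j"
      using K[OF tr_Zp tr_Zp h4 _ _ ne(1)] h3 by simp
    moreover have "Ln x y = S i" using K[OF zero_Zp di(1) di(2)[symmetric] _ _ ne(1)] xy di by simp
    ultimately have e: "S i = tr t ` S j" by simp
    hence "S i = S j" using RR_tr[OF Si[OF ij(2)] Si[OF ij(1)] tZ] by simp
    hence "i = j" using injS ij by blast
    have "t = 0"
    proof (rule ccontr)
      assume "t \<noteq> 0"
      have "tr t ` Ln 0 di = Ln 0 di" using e \<open>S i = S j\<close> di by simp
      thus False using noninv[OF di(1,2) tZ \<open>t \<noteq> 0\<close>] by simp
    qed
    hence "p dvd x - z" by (simp add: t_def mod_eq_0_iff_dvd)
    hence "x mod p = z mod p" by (simp add: mod_eq_dvd_iff)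
    hence xz: "x = z" using Z by (simp add: Zp_mod)
    hence "p dvd (x - y) - (x - w)" using eq by (simp add: mod_eq_dvd_iff)
    hence "p dvd w - y" by simp
    hence "w mod p = y mod p" by (simp add: mod_eq_dvd_iff)
    thus "y = w" using Z by (simp add: Zp_mod)
    show "x = z" by (rule xz)
  qed
  have char: "X \<in> BB \<longleftrightarrow> (X \<subseteq> Zp p \<and> card X = 3 \<and>
               \<not> (\<exists>i<k. \<exists>T\<subseteq>S i. \<exists>a\<in>Zp p. X = translate p T a))" for X
  proof
    assume X: "X \<in> BB"
    show "X \<subseteq> Zp p \<and> card X = 3 \<and> \<not> (\<exists>i<k. \<exists>T\<subseteq>S i. \<exists>a\<in>Zp p. X = translate p T a)"
    proof (intro conjI notI)
      show "X \<subseteq> Zp p" using bases_sub X by simp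
      show "card X = 3" using bases_card X by simp
    next
      assume "\<exists>i<k. \<exists>T\<subseteq>S i. \<exists>a\<in>Zp p. X = translate p T a"
      then obtain i T a where iT: "i < k" "T \<subseteq> S i" "a \<in> Zp p" "X = tr a ` T"
        by (auto simp: translate_eq)
      obtain d where d: "d \<in> Zp p" "d \<noteq> 0" "S i = Ln 0 d" using Sline iT by blast
      have "X \<subseteq> tr a ` S i" using iT by auto
      also have "\<dots> = Ln (tr a 0) (tr a d)" using Ln_tr[OF zero_Zp d(1) iT(3)] d by simp
      finally have sub: "X \<subseteq> Ln (tr a 0) (tr a d)" .
      have "tr a 0 \<noteq> tr a d"
      proof
        assume "tr a 0 = tr a d"
        hence "0 = d" by (rule tr_inj[OF zero_Zp d(1)])
        with d(2) show False by simp
      qed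
      from basis_not_in_line[OF X tr_Zp tr_Zp this sub] show False .
    qed
  next
    assume A: "X \<subseteq> Zp p \<and> card X = 3 \<and> \<not> (\<exists>i<k. \<exists>T\<subseteq>S i. \<exists>a\<in>Zp p. X = translate p T a)"
    show "X \<in> BB"
    proof (rule ccontr)
      assume nX: "X \<notin> BB"
      have "card X = 3" using A by simp
      then obtain a b c where abc: "X = {a, b, c}" "a \<noteq> b" "b \<noteq> c" "a \<noteq> c"
        unfolding card_3_iff by blast
      have Z: "a \<in> Zp p" "b \<in> Zp p" "c \<in> Zp p" using A abc by auto
      have sub: "X \<subseteq> Ln a b" using abc Z nX by (auto simp: Ln_def)
      obtain M c' where M: "M \<in> RR" "c' \<in> Zp p" "Ln a b = tr c' ` M"
        using cover[OF Z(1,2) abc(2)] by blast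
      obtain i where i: "i < k" "S i = M" using surjS[OF M(1)] by blast
      define T where "T = {m \<in> M. tr c' m \<in> X}"
      have "X = tr c' ` T"
      proof
        show "X \<subseteq> tr c' ` T"
        proof
          fix v assume "v \<in> X"
          then obtain m where "m \<in> M" "v = tr c' m" using sub M(3) by blast
          thus "v \<in> tr c' ` T" using \<open>v \<in> X\<close> T_def by blast
        qed
      qed (auto simp: T_def)
      hence "X = translate p T c'" by (simp add: translate_eq)
      moreover have "T \<subseteq> S i" using i T_def by auto
      ultimately have "\<exists>i<k. \<exists>T\<subseteq>S i. \<exists>a\<in>Zp p. X = translate p T a"
        using i(1) M(2) by blast
      thus False using A by blast
    qed
  qed
  show ?thesis
    by (rule exI[of _ k], rule exI[of _ S], rule conjI[OF dds], rule allI, rule char)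
qed
end

theorem theorem3p28:
  fixes p :: int and \<B> :: "int set set"
  assumes "prime p" and "odd p"
    and "matroid_bases (Zp p) \<B>"
    and "simple_matroid (Zp p) \<B>"
    and "matroid_rank_eq \<B> 3"
    and "Zp_invariant p \<B>"
  shows "\<exists>k S. distinct_difference_system p k S \<and>
           (\<forall>B. B \<in> \<B> \<longleftrightarrow>
              (B \<subseteq> Zp p \<and> card B = 3 \<and>
               \<not> (\<exists>i<k. \<exists>T\<subseteq>S i. \<exists>a\<in>Zp p. B = translate p T a)))"
proof -
  interpret zpm p \<B> using assms by unfold_locales
  show ?thesis by (rule main)
qed

end
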